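(* Let $\pi_1,\dots,\pi_m$ be permutations of order at least two with $|\pi_1|\ge|\pi_2|\ge\dots\ge|\pi_m|$. If there exist non-zero reals $t_1,\dots,t_m$ with $\sum_{i\in[m]}t_iP_{\pi_i}=0$, then $m\ge2$ and $|\pi_1|=|\pi_2|$.
   Context: A $k$-permutation is a bijection of $[k]=\{1,\dots,k\}$; $|\pi|$ denotes its order. The gradient polynomial of a $k$-permutation $\pi$ is $P_\pi(\alpha,\beta)=k!\sum_{m\in[k]}\left(\frac{k-m}{1-\alpha}-\frac{m-1}{\alpha}\right)\left(\frac{k-\pi(m)}{1-\beta}-\frac{\pi(m)-1}{\beta}\right)\frac{\alpha^{m-1}(1-\alpha)^{k-m}\beta^{\pi(m)-1}(1-\beta)^{k-\pi(m)}}{(m-1)!(k-m)!(\pi(m)-1)!(k-\pi(m))!}$, a polynomial in $\alpha,\beta$; the equation $\sum t_iP_{\pi_i}=0$ is an identity of polynomials. *)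

theory Defs
  imports "HOL-Combinatorics.Permutations" Complex_Main
begin

text \<open>The factor (k-m)/(1-x) - (m-1)/x times x^(m-1)(1-x)^(k-m), written
  as the polynomial it literally equals (the derivative of x^(m-1)(1-x)^(k-m)).
  Natural-number exponent truncation only occurs where the coefficient is 0.\<close>
definition dbern :: "nat \<Rightarrow> nat \<Rightarrow> real \<Rightarrow> real" where
  "dbern k m x = real (k - m) * x ^ (m - 1) * (1 - x) ^ (k - m - 1)
               - real (m - 1) * x ^ (m - 2) * (1 - x) ^ (k - m)"

definition gradP :: "nat \<Rightarrow> (nat \<Rightarrow> nat) \<Rightarrow> real \<Rightarrow> real \<Rightarrow> real" where
  "gradP k \<pi> \<alpha> \<beta> = fact k * (\<Sum>m\<in>{1..k}.
      dbern k m \<alpha> * dbern k (\<pi> m) \<beta> /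
      (fact (m - 1) * fact (k - m) * fact (\<pi> m - 1) * fact (k - \<pi> m)))"

end

theory Submission imports Defs begin

lemma lim_pow:
  "((\<lambda>x::real. x^a*(1-x)^b / x^(a+b+d)) \<longlongrightarrow> (if d=0 then (-1)^b else 0)) at_top"
proof -
  have ev: "\<forall>\<^sub>F x::real in at_top. ((1-x)/x)^b * (inverse x)^d = x^a*(1-x)^b / x^(a+b+d)"
    using eventually_gt_at_top[of "0::real"]
  proof eventually_elim
    case (elim x)
    then show ?case by (simp add: power_add power_divide field_simps)
  qed
  have i0: "((\<lambda>x::real. inverse x) \<longlongrightarrow> 0) at_top"
    by (rule tendsto_inverse_0_at_top) (rule filterlim_ident)
  have "((\<lambda>x::real. (1-x)/x) \<longlongrightarrow> -1) at_top"
  proof -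
    have "((\<lambda>x::real. inverse x - 1) \<longlongrightarrow> 0 - 1) at_top"
      by (intro tendsto_intros i0)
    moreover have "\<forall>\<^sub>F x in at_top. inverse x - 1 = (1-x)/(x::real)"
      using eventually_gt_at_top[of "0::real"] by eventually_elim (simp add: field_simps)
    ultimately show ?thesis by (simp add: tendsto_cong)
  qed
  then have "((\<lambda>x::real. ((1-x)/x)^b * (inverse x)^d) \<longlongrightarrow> (-1)^b * 0^d) at_top"
    by (intro tendsto_intros i0)
  then have "((\<lambda>x::real. x^a*(1-x)^b / x^(a+b+d)) \<longlongrightarrow> (-1)^b * 0^d) at_top"
    using ev by (rule Lim_transform_eventually)
  then show ?thesis by (cases d) auto
qed

definition lc :: "nat \<Rightarrow> nat \<Rightarrow> real" where
  "lc k m = real(k-m)*(-1)^(k-m-1) - real(m-1)*(-1)^(k-m)"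

lemma lim_dbern:
  assumes "1 \<le> j" "j \<le> k" "2 \<le> k" "k \<le> K"
  shows "((\<lambda>x. dbern k j x / x^(K-2)) \<longlongrightarrow>
     (if k = K then lc k j else 0)) at_top"
proof -
  have t1: "((\<lambda>x::real. real(k-j) * (x^(j-1)*(1-x)^(k-j-1)/x^(K-2))) \<longlongrightarrow>
     real(k-j)*(if K-k = 0 then (-1)^(k-j-1) else 0)) at_top"
  proof (cases "j = k")
    case True then show ?thesis by simp
  next
    case False
    then have "K-2 = (j-1)+(k-j-1)+(K-k)" using assms by simp
    then show ?thesis by (simp only:) (intro tendsto_mult_left lim_pow)
  qed
  have t2: "((\<lambda>x::real. real(j-1) * (x^(j-2)*(1-x)^(k-j)/x^(K-2))) \<longlongrightarrow>
     real(j-1)*(if K-k = 0 then (-1)^(k-j) else 0)) at_top"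
  proof (cases "j = 1")
    case True then show ?thesis by simp
  next
    case False
    then have "K-2 = (j-2)+(k-j)+(K-k)" using assms by simp
    then show ?thesis by (simp only:) (intro tendsto_mult_left lim_pow)
  qed
  have "((\<lambda>x::real. real(k-j) * (x^(j-1)*(1-x)^(k-j-1)/x^(K-2)) - real(j-1) * (x^(j-2)*(1-x)^(k-j)/x^(K-2))) \<longlongrightarrow>
     real(k-j)*(if K-k = 0 then (-1)^(k-j-1) else 0) - real(j-1)*(if K-k = 0 then (-1)^(k-j) else 0)) at_top"
    by (intro tendsto_diff t1 t2)
  moreover have "(\<lambda>x::real. real(k-j) * (x^(j-1)*(1-x)^(k-j-1)/x^(K-2)) - real(j-1) * (x^(j-2)*(1-x)^(k-j)/x^(K-2)))
     = (\<lambda>x. dbern k j x / x^(K-2))"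
    by (rule ext) (simp add: dbern_def diff_divide_distrib)
  moreover have "K-k = 0 \<longleftrightarrow> k = K" using assms by auto
  ultimately show ?thesis unfolding lc_def by (auto split: if_splits)
qed

lemma deriv_b:
  "((\<lambda>x. x^(j-1)*(1-x)^(K-j)) has_real_derivative - dbern K j b) (at b)"
  unfolding dbern_def
  by (auto intro!: derivative_eq_intros simp: algebra_simps diff_diff_left numeral_2_eq_2)

lemma binom_sum:
  assumes "K \<ge> 1"
  shows "(\<Sum>j\<in>{1..K}. (b::real)^(j-1)*(1-b)^(K-j)/(fact(j-1)*fact(K-j))) = 1/fact(K-1)"
proof -
  define n where "n = K-1"
  have K: "K = Suc n" using assms n_def by simp
  have "(\<Sum>j\<in>{1..K}. b^(j-1)*(1-b)^(K-j)/(fact(j-1)*fact(K-j))) =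
        (\<Sum>i\<in>{0..n}. b^i*(1-b)^(n-i)/(fact i*fact(n-i)))"
    unfolding K unfolding One_nat_def sum.shift_bounds_cl_Suc_ivl by simp
  also have "\<dots> = (\<Sum>i\<le>n. of_nat (n choose i) * b^i*(1-b)^(n-i)) / fact n"
    unfolding sum_divide_distrib atLeast0AtMost
    by (intro sum.cong refl) (simp add: binomial_fact field_simps)
  also have "\<dots> = (b + (1-b))^n / fact n" using binomial_ring[of b "1-b" n] by simp
  finally show ?thesis by (simp add: n_def)
qed

lemma indep:
  assumes K2: "K \<ge> 2"
    and H: "\<And>b. (\<Sum>j\<in>{1..K}. d j * dbern K j b / (fact(j-1)*fact(K-j))) = (0::real)"
    and j: "j \<in> {1..K}"
  shows "d j = d 1"
proof -
  define B where "B b = (\<Sum>j\<in>{1..K}. d j * (b^(j-1)*(1-b)^(K-j)) / (fact(j-1)*fact(K-j)))" for b :: real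
  have D: "(B has_real_derivative 0) (at b)" for b
  proof -
    have d1: "(B has_real_derivative (\<Sum>j\<in>{1..K}. d j * (- dbern K j b) / (fact(j-1)*fact(K-j)))) (at b)"
      unfolding B_def
      by (intro DERIV_sum DERIV_cdivide DERIV_cmult deriv_b)
    have "(\<Sum>j\<in>{1..K}. d j * (- dbern K j b) / (fact(j-1)*fact(K-j))) = - (\<Sum>j\<in>{1..K}. d j * dbern K j b / (fact(j-1)*fact(K-j)))"
      by (simp add: sum_negf[symmetric])
    then show ?thesis using H d1 by simp
  qed
  have B0: "B 0 = d 1 / fact (K-1)"
  proof -
    have "B 0 = (\<Sum>j\<in>{1..K}. if j = 1 then d 1 / fact (K-1) else 0)"
      unfolding B_def by (intro sum.cong refl) auto
    also have "\<dots> = d 1 / fact (K-1)" using K2 by (simp add: sum.delta)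
    finally show ?thesis .
  qed
  have BB: "B b = d 1 / fact (K-1)" for b
    using DERIV_isconst_all[of B b 0] D B0 by auto
  define e where "e j = d j - d 1" for j
  have E: "(\<Sum>j\<in>{1..K}. e j * (b^(j-1)*(1-b)^(K-j)) / (fact(j-1)*fact(K-j))) = 0" for b :: real
  proof -
    have "(\<Sum>j\<in>{1..K}. e j * (b^(j-1)*(1-b)^(K-j)) / (fact(j-1)*fact(K-j)))
       = B b - d 1 * (\<Sum>j\<in>{1..K}. b^(j-1)*(1-b)^(K-j)/(fact(j-1)*fact(K-j)))"
      unfolding B_def e_def sum_distrib_left sum_subtractf[symmetric]
      by (intro sum.cong refl) (simp add: field_simps)
    also have "\<dots> = 0" using BB binom_sum[of K b] K2 by simp
    finally show ?thesis .
  qed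
  define n where "n = K-1"
  have K: "K = Suc n" using K2 n_def by simp
  define c where "c i = e (Suc i) / (fact i * fact (n-i))" for i
  have R: "(\<Sum>i\<le>n. c i * y^i) = 0" if y: "y > 0" for y :: real
  proof -
    have "(\<Sum>i\<le>n. c i * y^i) = (1+y)^n * (\<Sum>j\<in>{1..K}. e j * ((y/(1+y))^(j-1)*(1-y/(1+y))^(K-j)) / (fact(j-1)*fact(K-j)))"
    proof -
      have "(\<Sum>j\<in>{1..K}. e j * ((y/(1+y))^(j-1)*(1-y/(1+y))^(K-j)) / (fact(j-1)*fact(K-j)))
         = (\<Sum>i\<in>{0..n}. e (Suc i) * ((y/(1+y))^i*(1-y/(1+y))^(n-i)) / (fact i*fact(n-i)))"
        unfolding K unfolding One_nat_def sum.shift_bounds_cl_Suc_ivl by simp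
      also have "\<dots> = (\<Sum>i\<le>n. c i * y^i / (1+y)^n)"
        unfolding atLeast0AtMost
      proof (intro sum.cong refl)
        fix i assume i: "i \<in> {..n}"
        have "1 - y/(1+y) = 1/(1+y)" using y by (simp add: field_simps)
        moreover have "(1+y)^n = (1+y)^i * (1+y)^(n-i)" using i
          by (simp add: power_add[symmetric])
        ultimately show "e (Suc i) * ((y/(1+y))^i*(1-y/(1+y))^(n-i)) / (fact i*fact(n-i)) = c i * y^i / (1+y)^n"
          unfolding c_def using y by (simp add: power_divide field_simps)
      qed
      finally show ?thesis using y by (simp add: sum_divide_distrib[symmetric])
    qed
    then show ?thesis using E by simp
  qed
  have "\<forall>i\<le>n. c i = 0"
  proof (rule ccontr)
    assume "\<not> ?thesis"
    then have "finite {x::real. (\<Sum>i\<le>n. c i * x^i) = 0}"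
      using polyfun_finite_roots by blast
    moreover have "{0<..} \<subseteq> {x::real. (\<Sum>i\<le>n. c i * x^i) = 0}" using R by auto
    ultimately have "finite {0::real<..}" by (rule finite_subset[rotated])
    then show False using infinite_Ioi by auto
  qed
  then have "e j = 0" using j unfolding c_def K
    by (cases j) (auto simp: K)
  then show ?thesis by (simp add: e_def)
qed

lemma lim_gradP:
  assumes "2 \<le> k" "k \<le> K"
  shows "((\<lambda>x. gradP k p x b / x^(K-2)) \<longlongrightarrow>
     (if k = K then fact k * (\<Sum>m\<in>{1..k}. lc k m * dbern k (p m) b / (fact(m-1)*fact(k-m)*fact(p m-1)*fact(k-p m))) else 0)) at_top"
proof -
  have L: "((\<lambda>x. fact k * (\<Sum>m\<in>{1..k}. (dbern k m x / x^(K-2)) * (dbern k (p m) b / (fact(m-1)*fact(k-m)*fact(p m-1)*fact(k-p m)))))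
     \<longlongrightarrow> fact k * (\<Sum>m\<in>{1..k}. (if k = K then lc k m else 0) * (dbern k (p m) b / (fact(m-1)*fact(k-m)*fact(p m-1)*fact(k-p m))))) at_top"
    apply (intro tendsto_mult_left tendsto_sum tendsto_mult_right)
    subgoal for m using lim_dbern[of m k K] assms by auto
    done
  have EQ: "(\<lambda>x. fact k * (\<Sum>m\<in>{1..k}. (dbern k m x / x^(K-2)) * (dbern k (p m) b / (fact(m-1)*fact(k-m)*fact(p m-1)*fact(k-p m)))))
     = (\<lambda>x. gradP k p x b / x^(K-2))"
    unfolding gradP_def times_divide_eq_right[symmetric] sum_divide_distrib
    by (rule ext, rule arg_cong[where f="(*) (fact k)"], rule sum.cong) auto
  have V: "fact k * (\<Sum>m\<in>{1..k}. (if k = K then lc k m else 0) * (dbern k (p m) b / (fact(m-1)*fact(k-m)*fact(p m-1)*fact(k-p m))))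
    = (if k = K then fact k * (\<Sum>m\<in>{1..k}. lc k m * dbern k (p m) b / (fact(m-1)*fact(k-m)*fact(p m-1)*fact(k-p m))) else 0)"
    by (cases "k = K") auto
  show ?thesis using L unfolding EQ V .
qed

lemma w_ne:
  assumes "K \<ge> 2"
  shows "lc K 1 / (fact (1-1) * fact (K-1)) \<noteq> lc K 2 / (fact (2-1) * fact (K-2))"
proof -
  obtain n where K: "K = n + 2" using assms by (metis add.commute le_Suc_ex)
  have a: "lc K 1 = (n+1)*(-1)^n" unfolding lc_def K by simp
  have b: "lc K 2 = -((n+1)*(-1)^n)" unfolding lc_def K by (cases n) (auto simp: algebra_simps)
  define A where "A = real (n+1) * (-1)^n"
  have A: "A \<noteq> 0" unfolding A_def by simp
  have P: "fact (K-1) > (0::real)" "fact (K-2) > (0::real)" by auto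
  show ?thesis
  proof
    assume "lc K 1 / (fact (1-1) * fact (K-1)) = lc K 2 / (fact (2-1) * fact (K-2))"
    then have "A / fact (K-1) = - A / fact (K-2)" unfolding a b A_def by simp
    then have "A * fact (K-2) = - A * fact (K-1)" using P by (simp add: field_simps)
    then have "A * (fact (K-2) + fact (K-1)) = 0" by (simp add: algebra_simps)
    moreover have "fact (K-2) + fact (K-1) > (0::real)" using P by (intro add_pos_pos)
    ultimately show False using A by simp
  qed
qed

theorem lemma11:
  fixes m :: nat and k :: "nat \<Rightarrow> nat" and \<pi> :: "nat \<Rightarrow> nat \<Rightarrow> nat" and t :: "nat \<Rightarrow> real"
  assumes "m \<ge> 1"
    and "\<And>i. i \<in> {1..m} \<Longrightarrow> \<pi> i permutes {1..k i}"
    and "\<And>i. i \<in> {1..m} \<Longrightarrow> k i \<ge> 2"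
    and "\<And>i j. 1 \<le> i \<Longrightarrow> i \<le> j \<Longrightarrow> j \<le> m \<Longrightarrow> k j \<le> k i"
    and "\<And>i. i \<in> {1..m} \<Longrightarrow> t i \<noteq> 0"
    and "\<And>\<alpha> \<beta>. (\<Sum>i\<in>{1..m}. t i * gradP (k i) (\<pi> i) \<alpha> \<beta>) = 0"
  shows "m \<ge> 2 \<and> k 1 = k 2"
proof -
  obtain K where K: "k 1 = K" by blast
  have m1: "1 \<in> {1..m}" using assms(1) by simp
  have K2: "K \<ge> 2" using assms(3)[OF m1] K by simp
  have pK: "\<pi> 1 permutes {1..K}" using assms(2)[OF m1] K by simp
  have kle: "k i \<le> K" if "i \<in> {1..m}" for i using assms(4)[of 1 i] that K by auto
  define Sig where "Sig i b = (\<Sum>mm\<in>{1..k i}. lc (k i) mm * dbern (k i) (\<pi> i mm) b /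
      (fact(mm-1)*fact(k i-mm)*fact(\<pi> i mm-1)*fact(k i-\<pi> i mm)))" for i b
  have LS: "(\<Sum>i\<in>{1..m}. t i * (if k i = K then fact (k i) * Sig i b else 0)) = 0" for b
  proof -
    have "((\<lambda>x. \<Sum>i\<in>{1..m}. t i * (gradP (k i) (\<pi> i) x b / x^(K-2))) \<longlongrightarrow>
       (\<Sum>i\<in>{1..m}. t i * (if k i = K then fact (k i) * Sig i b else 0))) at_top"
      unfolding Sig_def
      by (intro tendsto_sum tendsto_mult_left lim_gradP) (use assms(3) kle in auto)
    moreover have "(\<lambda>x. \<Sum>i\<in>{1..m}. t i * (gradP (k i) (\<pi> i) x b / x^(K-2))) = (\<lambda>x. 0)"
    proof
      fix x
      have "(\<Sum>i\<in>{1..m}. t i * (gradP (k i) (\<pi> i) x b / x^(K-2)))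
          = (\<Sum>i\<in>{1..m}. t i * gradP (k i) (\<pi> i) x b) / x^(K-2)"
        by (simp add: sum_divide_distrib)
      then show "(\<Sum>i\<in>{1..m}. t i * (gradP (k i) (\<pi> i) x b / x^(K-2))) = 0"
        using assms(6) by simp
    qed
    ultimately show ?thesis by (simp add: tendsto_const_iff)
  qed
  show ?thesis
  proof (rule ccontr)
    assume neg: "\<not> ?thesis"
    have rest: "k i \<noteq> K" if i: "i \<in> {2..m}" for i
    proof -
      have "m \<ge> 2" using i by simp
      then have "k 2 \<noteq> K" using neg K by simp
      moreover have "k 2 \<le> K" using kle[of 2] i by simp
      moreover have "k i \<le> k 2" using assms(4)[of 2 i] i by simp
      ultimately show ?thesis by simp
    qed
    have S0: "Sig 1 b = 0" for b
    proof -
      have "(\<Sum>i\<in>{1..m}. t i * (if k i = K then fact (k i) * Sig i b else 0))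
         = t 1 * (fact K * Sig 1 b) + (\<Sum>i\<in>{Suc 1..m}. t i * (if k i = K then fact (k i) * Sig i b else 0))"
        using assms(1) K by (simp add: sum.atLeast_Suc_atMost)
      also have "(\<Sum>i\<in>{Suc 1..m}. t i * (if k i = K then fact (k i) * Sig i b else 0)) = 0"
        using rest by (intro sum.neutral) auto
      finally show ?thesis using LS[of b] assms(5)[OF m1] by simp
    qed
    define \<sigma> where "\<sigma> = \<pi> 1"
    define d where "d j = lc K (inv \<sigma> j) / (fact (inv \<sigma> j - 1) * fact (K - inv \<sigma> j))" for j
    have iv: "inv \<sigma> (\<sigma> x) = x" for x using permutes_inverses(2)[OF pK] \<sigma>_def by simp
    have H: "(\<Sum>j\<in>{1..K}. d j * dbern K j b / (fact(j-1)*fact(K-j))) = 0" for b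
    proof -
      have "(\<Sum>j\<in>{1..K}. d j * dbern K j b / (fact(j-1)*fact(K-j)))
          = (\<Sum>mm\<in>{1..K}. d (\<sigma> mm) * dbern K (\<sigma> mm) b / (fact(\<sigma> mm-1)*fact(K-\<sigma> mm)))"
        using sum.permute[OF pK[folded \<sigma>_def], of "\<lambda>j. d j * dbern K j b / (fact(j-1)*fact(K-j))"]
        by (simp add: comp_def)
      also have "\<dots> = Sig 1 b"
        unfolding Sig_def K \<sigma>_def[symmetric] d_def
        by (intro sum.cong refl) (simp add: iv field_simps)
      finally show ?thesis using S0 by simp
    qed
    have s1: "\<sigma> 1 \<in> {1..K}" "\<sigma> 2 \<in> {1..K}" using K2 permutes_in_image[OF pK] \<sigma>_def by auto
    have "d (\<sigma> 1) = d (\<sigma> 2)"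
      using indep[OF K2 H s1(1)] indep[OF K2 H s1(2)] by simp
    then have "lc K 1 / (fact (1-1) * fact (K-1)) = lc K 2 / (fact (2-1) * fact (K-2))"
      unfolding d_def \<sigma>_def using permutes_inverses(2)[OF pK] by simp
    then show False using w_ne[OF K2] by simp
  qed
qed

end
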